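(* Let $G=G_{\mathbf E}$ be a multi-GGS group which is not the constant GGS group, and let $g\in G$ be directed along the ray $\overline 0$. Then $g\in B$.
   Context: Let $p$ be an odd prime and $X=\{0,1,\dots,p-1\}$, identified with $\mathbb F_p$. $X^*$ is the $p$-regular rooted tree of finite words over $X$; $\mathrm{Aut}(X^* )$ acts on the right. Sections $g|_v$ are defined by $(vw)^g=v^g\,w^{g|_v}$, and the label $g|^v\in\mathrm{Sym}(X)$ is the permutation by which $g|_v$ acts on one-letter words. $\mathrm{Stab}(1)$ is the stabiliser of all one-letter words and $\psi_1\colon\mathrm{Stab}(1)\to\mathrm{Aut}(X^* )^p$, $g\mapsto(g|_0,\dots,g|_{p-1})$, is an isomorphism. Let $a$ be the rooted automorphism acting as $\sigma=(0\,1\,\cdots\,p-1)$ on the first letter and trivially on the remaining letters. Let $\mathbf E\le\mathbb F_p^{p-1}$ be a subspace of dimension $r\ge1$; $E$ is the $r\times(p-1)$ matrix whose rows form a fixed basis of $\mathbf E$, with columns $\mathbf e_1,\dots,\mathbf e_{p-1}$. For $\mathbf n\in\mathbb F_p^r$, $b^{\mathbf n}\in\mathrm{Stab}(1)$ is the unique automorphism with $\psi_1(b^{\mathbf n})=(b^{\mathbf n},a^{\mathbf n\cdot\mathbf e_1},\dots,a^{\mathbf n\cdot\mathbf e_{p-1}})$; $B=\{b^{\mathbf n}\}$. $G=G_{\mathbf E}$ is generated by $a$ and $B$; it is the constant GGS group if $\mathbf E=\{(\lambda,\dots,\lambda)\mid\lambda\in\mathbb F_p\}$. The ray $\overline0$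 consists of the vertices $0^n$ ($n\ge0$). An automorphism $g$ is directed along $\overline 0$ if it fixes every vertex $0^n$ and $g|^v=\mathrm{id}$ for every vertex $v$ that is not joined by an edge to some vertex $0^n$. *)

theory Defs
  imports Main "HOL-Computational_Algebra.Primes"
begin

(* Vertices of the p-regular rooted tree X^* : words over X = {0..p-1},
   represented as nat lists all of whose letters are < p.
   Automorphisms are represented as functions on nat list (fixing words
   with letters >= p, which are not vertices). *)

definition word_over :: "nat \<Rightarrow> nat list \<Rightarrow> bool" where
  "word_over p v \<longleftrightarrow> (\<forall>x\<in>set v. x < p)"

fun rot :: "nat \<Rightarrow> nat \<Rightarrow> nat list \<Rightarrow> nat list" where
  "rot p k [] = []"
| "rot p k (x # w) = (if x < p then ((x + k) mod p) # w else x # w)"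

(* the automorphism with psi_1(b_u) = (b_u, a^(u 1), ..., a^(u (p-1))) *)
fun bgen :: "nat \<Rightarrow> (nat \<Rightarrow> nat) \<Rightarrow> nat list \<Rightarrow> nat list" where
  "bgen p u [] = []"
| "bgen p u (x # w) =
     (if x = 0 then 0 # bgen p u w
      else if x < p then x # rot p (u x) w
      else x # w)"

(* exponent vector (n . e_1, ..., n . e_{p-1}) for n in F_p^r, where E is the
   r x (p-1) matrix with entries Emat j i (row j < r, column i in {1..p-1}) *)
definition expvec :: "nat \<Rightarrow> nat \<Rightarrow> (nat \<Rightarrow> nat \<Rightarrow> nat) \<Rightarrow> (nat \<Rightarrow> nat) \<Rightarrow> nat \<Rightarrow> nat" where
  "expvec p r Emat n = (\<lambda>i. (\<Sum>j<r. n j * Emat j i) mod p)"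

definition coeffs :: "nat \<Rightarrow> nat \<Rightarrow> (nat \<Rightarrow> nat) set" where
  "coeffs p r = {n. (\<forall>j<r. n j < p) \<and> (\<forall>j\<ge>r. n j = 0)}"

definition Bset :: "nat \<Rightarrow> nat \<Rightarrow> (nat \<Rightarrow> nat \<Rightarrow> nat) \<Rightarrow> (nat list \<Rightarrow> nat list) set" where
  "Bset p r Emat = (\<lambda>n. bgen p (expvec p r Emat n)) ` coeffs p r"

definition basis_matrix :: "nat \<Rightarrow> nat \<Rightarrow> (nat \<Rightarrow> nat \<Rightarrow> nat) \<Rightarrow> bool" where
  "basis_matrix p r Emat \<longleftrightarrow>
     (\<forall>j<r. \<forall>i\<in>{1..p-1}. Emat j i < p) \<and>
     (\<forall>n\<in>coeffs p r. (\<forall>i\<in>{1..p-1}. expvec p r Emat n i = 0) \<longrightarrow> (\<forall>j<r. n j = 0))"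

definition rowspace :: "nat \<Rightarrow> nat \<Rightarrow> (nat \<Rightarrow> nat \<Rightarrow> nat) \<Rightarrow> (nat \<Rightarrow> nat) set" where
  "rowspace p r Emat = (\<lambda>n i. if i \<in> {1..p-1} then expvec p r Emat n i else 0) ` coeffs p r"

definition constspace :: "nat \<Rightarrow> (nat \<Rightarrow> nat) set" where
  "constspace p = (\<lambda>c i. if i \<in> {1..p-1} then c else 0) ` {..<p}"

inductive_set gen_group :: "('a \<Rightarrow> 'a) set \<Rightarrow> ('a \<Rightarrow> 'a) set" for S where
  gen_id: "id \<in> gen_group S"
| gen_base: "s \<in> S \<Longrightarrow> s \<in> gen_group S"
| gen_comp: "f \<in> gen_group S \<Longrightarrow> g \<in> gen_group S \<Longrightarrow> f \<circ> g \<in> gen_group S"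
| gen_inv: "f \<in> gen_group S \<Longrightarrow> inv f \<in> gen_group S"

definition GE :: "nat \<Rightarrow> nat \<Rightarrow> (nat \<Rightarrow> nat \<Rightarrow> nat) \<Rightarrow> (nat list \<Rightarrow> nat list) set" where
  "GE p r Emat = gen_group ({rot p 1} \<union> Bset p r Emat)"

definition tree_edge :: "nat \<Rightarrow> nat list \<Rightarrow> nat list \<Rightarrow> bool" where
  "tree_edge p v w \<longleftrightarrow> (\<exists>x<p. w = v @ [x]) \<or> (\<exists>x<p. v = w @ [x])"

(* the label g|^v is the identity: g|_v fixes every one-letter word *)
definition trivial_label :: "nat \<Rightarrow> (nat list \<Rightarrow> nat list) \<Rightarrow> nat list \<Rightarrow> bool" where
  "trivial_label p g v \<longleftrightarrow> (\<forall>x<p. g (v @ [x]) = g v @ [x])"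

definition directed0 :: "nat \<Rightarrow> (nat list \<Rightarrow> nat list) \<Rightarrow> bool" where
  "directed0 p g \<longleftrightarrow>
     (\<forall>n. g (replicate n 0) = replicate n 0) \<and>
     (\<forall>v. word_over p v \<longrightarrow> \<not> (\<exists>n. tree_edge p v (replicate n 0)) \<longrightarrow> trivial_label p g v)"

end

theory Submission
  imports Defs
begin

datatype letter = LA nat | LB "nat \<Rightarrow> nat"

lemma rot_rot: "rot p a (rot p b xs) = rot p (a + b) xs"
  by (cases xs) (auto simp: mod_add_right_eq ac_simps)

lemma rot_comp: "rot p a \<circ> rot p b = rot p (a + b)"
  using rot_rot by auto

lemma rot_mod: "a mod p = b mod p \<Longrightarrow> rot p a = rot p b"
proof
  fix xs assume "a mod p = b mod p" then show "rot p a xs = rot p b xs"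
    by (cases xs) (auto simp: mod_add_right_eq[of _ a p, symmetric] mod_add_right_eq[of _ b p, symmetric])
qed

lemma rot_0: "rot p 0 = id"
proof
  fix xs show "rot p 0 xs = id xs" by (cases xs) auto
qed

lemma rot_id: "a mod p = 0 \<Longrightarrow> rot p a = id"
  using rot_mod[of a p 0] rot_0 by simp

lemma bgen_comp: "bgen p u \<circ> bgen p v = bgen p (\<lambda>i. u i + v i)"
proof
  fix xs show "(bgen p u \<circ> bgen p v) xs = bgen p (\<lambda>i. u i + v i) xs"
  proof (induction xs)
    case Nil then show ?case by simp
  next
    case (Cons x xs) then show ?case
      by (auto simp: rot_rot)
  qed
qed

lemma bgen_mod: "(\<And>i. u i mod p = v i mod p) \<Longrightarrow> bgen p u = bgen p v"
proof
  fix xs assume h: "\<And>i. u i mod p = v i mod p"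
  show "bgen p u xs = bgen p v xs"
    by (induction xs) (auto simp: rot_mod[OF h])
qed

lemma bgen_0: "bgen p (\<lambda>_. 0) = id"
proof
  fix xs show "bgen p (\<lambda>_. 0) xs = id xs"
    by (induction xs) (auto simp: rot_0)
qed

lemma bgen_id: "(\<And>i. u i mod p = 0) \<Longrightarrow> bgen p u = id"
  using bgen_mod[of u p "\<lambda>_. 0"] bgen_0 by simp

context
  fixes p r :: nat and E :: "nat \<Rightarrow> nat \<Rightarrow> nat"
begin

fun evl :: "letter \<Rightarrow> nat list \<Rightarrow> nat list" where
  "evl (LA k) = rot p k"
| "evl (LB n) = bgen p (expvec p r E n)"

definition ev :: "letter list \<Rightarrow> nat list \<Rightarrow> nat list" where
  "ev w = foldr (\<lambda>l f. evl l \<circ> f) w id"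

lemma ev_simps[simp]: "ev [] = id" "ev (l # w) = evl l \<circ> ev w"
  by (simp_all add: ev_def)

lemma ev_append: "ev (xs @ ys) = ev xs \<circ> ev ys"
  by (induction xs) (auto simp: comp_assoc)

fun alpha :: "letter list \<Rightarrow> nat" where
  "alpha [] = 0"
| "alpha (LA k # w) = k + alpha w"
| "alpha (LB n # w) = alpha w"

fun sec :: "letter list \<Rightarrow> nat \<Rightarrow> letter list" where
  "sec [] x = []"
| "sec (LA k # w) x = sec w x"
| "sec (LB n # w) x = (if (x + alpha w) mod p = 0 then LB n
      else LA (expvec p r E n ((x + alpha w) mod p))) # sec w x"

fun bsum :: "letter list \<Rightarrow> nat \<Rightarrow> nat" where
  "bsum [] = (\<lambda>_. 0)"
| "bsum (LA k # w) = bsum w"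
| "bsum (LB n # w) = (\<lambda>j. n j + bsum w j)"

fun nB :: "letter list \<Rightarrow> nat" where
  "nB [] = 0"
| "nB (LA k # w) = nB w"
| "nB (LB n # w) = Suc (nB w)"

definition dot :: "(nat \<Rightarrow> nat) \<Rightarrow> nat \<Rightarrow> nat" where
  "dot N i = (\<Sum>j<r. N j * E j i)"

lemma ev_nil[simp]: "ev w [] = []"
proof (induction w)
  case (Cons l w) then show ?case by (cases l) auto
qed simp

lemma ev_cons: "x < p \<Longrightarrow> ev w (x # u) = ((x + alpha w) mod p) # ev (sec w x) u"
proof (induction w arbitrary: u)
  case Nil then show ?case by simp
next
  case (Cons l w)
  have y: "(x + alpha w) mod p < p" using Cons.prems by simp
  have ih: "ev w (x # u) = ((x + alpha w) mod p) # ev (sec w x) u" using Cons by blast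
  show ?case
  proof (cases l)
    case (LA k)
    have "ev (l # w) (x # u) = rot p k (((x + alpha w) mod p) # ev (sec w x) u)"
      by (simp add: LA ih)
    also have "\<dots> = (((x + alpha w) mod p + k) mod p) # ev (sec w x) u"
      using y by simp
    also have "((x + alpha w) mod p + k) mod p = (x + alpha (l # w)) mod p"
      by (simp add: LA mod_add_left_eq) (simp add: algebra_simps)
    also have "ev (sec w x) u = ev (sec (l # w) x) u" by (simp add: LA)
    finally show ?thesis .
  next
    case (LB n)
    let ?y = "(x + alpha w) mod p"
    have "ev (l # w) (x # u) = bgen p (expvec p r E n) (?y # ev (sec w x) u)"
      by (simp add: LB ih)
    also have "\<dots> = ?y # ev (sec (l # w) x) u"
    proof (cases "?y = 0")
      case True
      have "sec (l # w) x = LB n # sec w x" using True by (simp add: LB)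
      then show ?thesis using True by simp
    next
      case False
      have "sec (l # w) x = LA (expvec p r E n ?y) # sec w x" using False by (simp add: LB)
      then show ?thesis using False y by simp
    qed
    finally show ?thesis by (simp add: LB)
  qed
qed

lemma ev_big: "0 < p \<Longrightarrow> p \<le> x \<Longrightarrow> ev w (x # u) = x # u"
proof (induction w)
  case (Cons l w) then show ?case by (cases l) auto
qed simp

lemma expvec_dot: "expvec p r E n i = dot n i mod p"
  by (simp add: expvec_def dot_def)

lemma dot_add: "dot (\<lambda>j. n j + m j) i = dot n i + dot m i"
  by (simp add: dot_def sum.distrib algebra_simps)

lemma dot_0: "dot (\<lambda>_. 0) i = 0"
  by (simp add: dot_def)

fun linv :: "letter \<Rightarrow> letter" where
  "linv (LA k) = LA ((p - 1) * k)"
| "linv (LB n) = LB (\<lambda>j. (p - 1) * n j)"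

lemma dot_smult: "dot (\<lambda>j. c * n j) i = c * dot n i"
  by (simp add: dot_def sum_distrib_left algebra_simps)

lemma linv_l:
  assumes "0 < p" shows "evl (linv l) \<circ> evl l = id"
proof (cases l)
  case (LA k)
  have "(p - 1) * k + k = p * k" using assms by (cases p) auto
  then show ?thesis by (simp add: LA rot_comp rot_id)
next
  case (LB n)
  have "bgen p (expvec p r E (\<lambda>j. (p - 1) * n j)) \<circ> bgen p (expvec p r E n) = id"
  proof -
    have "(expvec p r E (\<lambda>j. (p - 1) * n j) i + expvec p r E n i) mod p = 0" for i
    proof -
      have "(expvec p r E (\<lambda>j. (p - 1) * n j) i + expvec p r E n i) mod p
          = ((p - 1) * dot n i + dot n i) mod p"
        by (simp add: expvec_dot dot_smult mod_add_eq)
      also have "(p - 1) * dot n i + dot n i = p * dot n i" using assms by (cases p) auto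
      finally show ?thesis by simp
    qed
    then show ?thesis by (simp add: bgen_comp bgen_id)
  qed
  then show ?thesis by (simp add: LB)
qed

lemma linv_r:
  assumes "0 < p" shows "evl l \<circ> evl (linv l) = id"
proof (cases l)
  case (LA k)
  have "k + (p - 1) * k = p * k" using assms by (cases p) auto
  then show ?thesis by (simp add: LA rot_comp rot_id)
next
  case (LB n)
  have "bgen p (expvec p r E n) \<circ> bgen p (expvec p r E (\<lambda>j. (p - 1) * n j)) = id"
  proof -
    have "(expvec p r E n i + expvec p r E (\<lambda>j. (p - 1) * n j) i) mod p = 0" for i
    proof -
      have "(expvec p r E n i + expvec p r E (\<lambda>j. (p - 1) * n j) i) mod p
          = (dot n i + (p - 1) * dot n i) mod p"
        by (simp add: expvec_dot dot_smult mod_add_eq)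
      also have "dot n i + (p - 1) * dot n i = p * dot n i" using assms by (cases p) auto
      finally show ?thesis by simp
    qed
    then show ?thesis by (simp add: bgen_comp bgen_id)
  qed
  then show ?thesis by (simp add: LB)
qed

definition winv :: "letter list \<Rightarrow> letter list" where
  "winv w = rev (map linv w)"

lemma winv_l: "0 < p \<Longrightarrow> ev (winv w) \<circ> ev w = id"
proof (induction w)
  case Nil then show ?case by (simp add: winv_def)
next
  case (Cons l w)
  have "ev (winv (l # w)) \<circ> ev (l # w) = ev (winv w) \<circ> (evl (linv l) \<circ> evl l) \<circ> ev w"
    by (simp add: winv_def ev_append comp_assoc)
  also have "\<dots> = id" by (simp only: linv_l[OF Cons.prems] id_comp comp_id Cons.IH[OF Cons.prems])
  finally show ?case .
qed

lemma winv_r: "0 < p \<Longrightarrow> ev w \<circ> ev (winv w) = id"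
proof (induction w)
  case Nil then show ?case by (simp add: winv_def)
next
  case (Cons l w)
  have "ev (l # w) \<circ> ev (winv (l # w)) = evl l \<circ> (ev w \<circ> ev (winv w)) \<circ> evl (linv l)"
    by (simp add: winv_def ev_append comp_assoc)
  also have "\<dots> = id" by (simp only: linv_r[OF Cons.prems] id_comp comp_id Cons.IH[OF Cons.prems])
  finally show ?case .
qed

lemma inv_ev: "0 < p \<Longrightarrow> inv (ev w) = ev (winv w)"
  using winv_l winv_r by (metis inv_unique_comp)

lemma gen_ev:
  assumes "0 < p" "g \<in> gen_group ({rot p 1} \<union> Bset p r E)"
  shows "\<exists>w. g = ev w"
  using assms(2)
proof (induction rule: gen_group.induct)
  case gen_id then show ?case by (metis ev_simps(1))
next
  case (gen_base s)
  then show ?case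
  proof
    assume "s \<in> {rot p 1}" then have "s = ev [LA 1]" by simp
    then show ?thesis by blast
  next
    assume "s \<in> Bset p r E"
    then obtain n where "s = bgen p (expvec p r E n)" by (auto simp: Bset_def)
    then have "s = ev [LB n]" by simp
    then show ?thesis by blast
  qed
next
  case (gen_comp f g)
  then obtain w1 w2 where "f = ev w1" "g = ev w2" by blast
  then have "f \<circ> g = ev (w1 @ w2)" by (simp add: ev_append)
  then show ?case by blast
next
  case (gen_inv f)
  then obtain w1 where "f = ev w1" by blast
  then show ?case using inv_ev assms(1) by blast
qed

lemma unique_y:
  assumes "0 < p" "y < p"
  shows "((y + c) mod p = 0) = (y = (p - c mod p) mod p)"
proof -
  let ?c = "c mod p"
  have c: "?c < p" using assms by simp
  have e: "(y + c) mod p = (y + ?c) mod p" by (simp add: mod_add_right_eq)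
  show ?thesis
  proof (cases "?c = 0")
    case True then show ?thesis using e assms by simp
  next
    case False
    then have pc: "(p - ?c) mod p = p - ?c" using c by simp
    show ?thesis
    proof (cases "y + ?c < p")
      case True then show ?thesis using e pc False by auto
    next
      case False
      have lt: "y + ?c - p < p" using c assms by arith
      have "(y + ?c) mod p = y + ?c - p" using False c assms lt
        by (simp add: le_mod_geq)
      then show ?thesis using e pc False c assms by auto
    qed
  qed
qed

lemma sum_delta_mod:
  assumes "0 < p"
  shows "(\<Sum>y<p. if (y + c) mod p = 0 then f y else 0) = f ((p - c mod p) mod p)"
proof -
  have "(\<Sum>y<p. if (y + c) mod p = 0 then f y else 0)
      = (\<Sum>y<p. if y = (p - c mod p) mod p then f y else 0)"
    by (rule sum.cong) (auto simp: unique_y[OF assms])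
  also have "\<dots> = f ((p - c mod p) mod p)"
    using assms by (simp add: sum.delta)
  finally show ?thesis .
qed

lemma shift_mod:
  assumes "y < p" "(y + c) mod p = 0"
  shows "(x + p - y) mod p = (x + c) mod p"
proof -
  have "(x + p - y) mod p = ((x + p - y) + (y + c) mod p) mod p" using assms by simp
  also have "\<dots> = ((x + p - y) + (y + c)) mod p" by (simp add: mod_add_right_eq)
  also have "(x + p - y) + (y + c) = (x + c) + p" using assms by simp
  finally show ?thesis by simp
qed

lemma len_sec: "length (sec w x) = nB w"
  by (induction w rule: nB.induct) auto

lemma nB_le: "nB w \<le> length w"
  by (induction w rule: nB.induct) auto

lemma nB_len: "nB w = length w \<Longrightarrow> \<forall>l\<in>set w. \<exists>n. l = LB n"
proof (induction w rule: nB.induct)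
  case (2 k w) then show ?case using nB_le[of w] by simp
qed auto

lemma nB0: "nB w = 0 \<Longrightarrow> bsum w = (\<lambda>_. 0)"
  by (induction w rule: nB.induct) auto

lemma nB_sec_sum: "0 < p \<Longrightarrow> (\<Sum>y<p. nB (sec w y)) = nB w"
proof (induction w rule: nB.induct)
  case (3 n w)
  have "(\<Sum>y<p. nB (sec (LB n # w) y))
      = (\<Sum>y<p. (if (y + alpha w) mod p = 0 then 1 else 0) + nB (sec w y))"
    by (rule sum.cong) auto
  also have "\<dots> = 1 + nB w"
    by (simp only: sum.distrib sum_delta_mod[OF 3(2)] 3)
  finally show ?case by simp
qed auto

lemma bsum_sec_sum: "0 < p \<Longrightarrow> (\<Sum>y<p. bsum (sec w y) j) = bsum w j"
proof (induction w rule: nB.induct)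
  case (3 n w)
  have "(\<Sum>y<p. bsum (sec (LB n # w) y) j)
      = (\<Sum>y<p. (if (y + alpha w) mod p = 0 then n j else 0) + bsum (sec w y) j)"
    by (rule sum.cong) auto
  also have "\<dots> = n j + bsum w j"
    by (simp only: sum.distrib sum_delta_mod[OF 3(2)] 3)
  finally show ?case by simp
qed auto

lemma allB_ev: "\<forall>l\<in>set w. \<exists>n. l = LB n \<Longrightarrow> ev w = bgen p (\<lambda>i. dot (bsum w) i)"
proof (induction w)
  case Nil then show ?case by (simp add: dot_0 bgen_0)
next
  case (Cons l w)
  then obtain n where l: "l = LB n" by auto
  have "ev (l # w) = bgen p (expvec p r E n) \<circ> bgen p (\<lambda>i. dot (bsum w) i)"
    using Cons by (simp add: l)
  also have "\<dots> = bgen p (\<lambda>i. expvec p r E n i + dot (bsum w) i)" by (rule bgen_comp)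
  also have "\<dots> = bgen p (\<lambda>i. dot (bsum (l # w)) i)"
    by (rule bgen_mod) (simp add: l dot_add expvec_dot mod_add_left_eq)
  finally show ?case .
qed

lemma alpha_sec:
  assumes p: "0 < p" and x: "x < p"
  shows "alpha (sec w x) mod p
    = (\<Sum>y<p. if y = x then 0 else dot (bsum (sec w y)) ((x + p - y) mod p)) mod p"
proof (induction w rule: nB.induct)
  case 1
  have "(\<Sum>y<p. if y = x then 0 else dot (bsum (sec [] y)) ((x + p - y) mod p)) = 0"
    by (simp add: dot_def)
  then show ?case by simp
next
  case (2 k w)
  have t1: "sec (LA k # w) y = sec w y" for y by simp
  have t2: "sec (LA k # w) = sec w" by (rule ext) simp
  have "(\<Sum>y<p. if y = x then 0 else dot (bsum (sec (LA k # w) y)) ((x + p - y) mod p))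
      = (\<Sum>y<p. if y = x then 0 else dot (bsum (sec w y)) ((x + p - y) mod p))"
    by (simp only: t2)
  then show ?case using 2 by simp
next
  case (3 n w)
  define c where "c = alpha w"
  define y0 where "y0 = (p - c mod p) mod p"
  define T where "T = (\<Sum>y<p. if y = x then 0 else dot (bsum (sec w y)) ((x + p - y) mod p))"
  define H where "H = (if (x + c) mod p = 0 then 0 else expvec p r E n ((x + c) mod p))"
  define H' where "H' = (if y0 = x then 0 else dot n ((x + p - y0) mod p))"
  have h1: "alpha (sec (LB n # w) x) = H + alpha (sec w x)"
    by (simp add: H_def c_def)
  have h2: "dot (bsum (sec (LB n # w) y)) i
      = (if (y + c) mod p = 0 then dot n i else 0) + dot (bsum (sec w y)) i" for y i
    by (cases "(y + c) mod p = 0") (simp_all add: c_def dot_add)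
  have "(\<Sum>y<p. if y = x then 0 else dot (bsum (sec (LB n # w) y)) ((x + p - y) mod p))
      = (\<Sum>y<p. (if (y + c) mod p = 0 then (if y = x then 0 else dot n ((x + p - y) mod p)) else 0)
          + (if y = x then 0 else dot (bsum (sec w y)) ((x + p - y) mod p)))"
    apply (rule sum.cong)
     apply (rule refl)
    apply (simp only: h2)
    apply simp
    done
  also have "\<dots> = H' + T"
    by (simp only: sum.distrib sum_delta_mod[OF p] H'_def y0_def T_def)
  finally have h3: "(\<Sum>y<p. if y = x then 0 else dot (bsum (sec (LB n # w) y)) ((x + p - y) mod p))
      = H' + T" .
  have y0p: "y0 < p" using p by (simp add: y0_def)
  have y0c: "(y0 + c) mod p = 0" using unique_y[OF p y0p, of c] by (simp add: y0_def)
  have eqx: "(y0 = x) = ((x + c) mod p = 0)" using unique_y[OF p x, of c] by (auto simp: y0_def)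
  have h5: "H' mod p = H mod p"
  proof (cases "y0 = x")
    case True then show ?thesis using eqx by (simp add: H_def H'_def)
  next
    case False
    then have "H' = dot n ((x + c) mod p)" using shift_mod[OF y0p y0c, of x] by (simp add: H'_def)
    moreover have "H = dot n ((x + c) mod p) mod p" using False eqx by (simp add: H_def expvec_dot)
    ultimately show ?thesis by simp
  qed
  have ih: "alpha (sec w x) mod p = T mod p" using 3 by (simp add: T_def)
  have "alpha (sec (LB n # w) x) mod p = (H mod p + alpha (sec w x) mod p) mod p"
    by (simp only: h1 mod_add_eq)
  also have "\<dots> = (H' mod p + T mod p) mod p" by (simp add: h5 ih)
  also have "\<dots> = (H' + T) mod p" by (simp add: mod_add_eq)
  finally show ?case by (simp add: h3)
qed

lemma expvec_modc: "expvec p r E (\<lambda>j. if j < r then N j mod p else 0) = expvec p r E N"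
proof
  fix i
  have "(\<Sum>j<r. (if j < r then N j mod p else 0) * E j i) mod p
      = (\<Sum>j<r. (if j < r then N j mod p else 0) * E j i mod p) mod p"
    by (simp add: mod_sum_eq)
  also have "\<dots> = (\<Sum>j<r. N j * E j i mod p) mod p"
    by (rule arg_cong[where f="\<lambda>t. t mod p"], rule sum.cong) (auto simp: mod_mult_left_eq)
  also have "\<dots> = (\<Sum>j<r. N j * E j i) mod p" by (simp add: mod_sum_eq)
  finally show "expvec p r E (\<lambda>j. if j < r then N j mod p else 0) i = expvec p r E N i"
    by (simp add: expvec_def)
qed

lemma word_over_cons[simp]: "word_over p (y # v) = (y < p \<and> word_over p v)"
  by (simp add: word_over_def)

lemma word_over_nil[simp]: "word_over p []"
  by (simp add: word_over_def)

lemma rotR: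
  assumes p: "0 < p" and bm: "basis_matrix p r E"
  shows "(\<forall>x<p. \<forall>v. word_over p v \<longrightarrow> ev (sec w x) v = v) \<Longrightarrow> \<forall>j<r. bsum w j mod p = 0"
proof (induction "nB w" arbitrary: w rule: less_induct)
  case less
  note H = less.prems
  have le: "nB (sec w x) \<le> nB w" for x using nB_le[of "sec w x"] by (simp add: len_sec)
  show ?case
  proof (cases "\<exists>x<p. nB (sec w x) = nB w")
    case True
    then obtain x where x: "x < p" "nB (sec w x) = nB w" by blast
    define N where "N = bsum (sec w x)"
    have allB: "\<forall>l\<in>set (sec w x). \<exists>n. l = LB n"
      using x(2) by (intro nB_len) (simp add: len_sec)
    have evs: "ev (sec w x) = bgen p (\<lambda>i. dot N i)" using allB_ev[OF allB] by (simp add: N_def)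
    have z: "expvec p r E N i = 0" if i: "i \<in> {1..p-1}" for i
    proof -
      have ip: "i < p" "i \<noteq> 0" using i p by auto
      have "ev (sec w x) [i, 0] = [i, 0]" using H x(1) ip by auto
      then have "bgen p (\<lambda>i. dot N i) [i, 0] = [i, 0]" by (simp add: evs)
      then have "dot N i mod p = 0" using ip p by simp
      then show ?thesis by (simp add: expvec_dot)
    qed
    define N' where "N' = (\<lambda>j. if j < r then N j mod p else 0)"
    have N'c: "N' \<in> coeffs p r" using p by (simp add: N'_def coeffs_def)
    have "\<forall>i\<in>{1..p-1}. expvec p r E N' i = 0" using z by (simp add: N'_def expvec_modc)
    then have N'0: "\<forall>j<r. N' j = 0" using bm N'c by (auto simp: basis_matrix_def)
    have others: "nB (sec w y) = 0" if y: "y < p" "y \<noteq> x" for y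
    proof -
      have "(\<Sum>y<p. nB (sec w y)) = nB (sec w x) + (\<Sum>y\<in>{..<p} - {x}. nB (sec w y))"
        using x(1) by (simp add: sum.remove)
      then have "(\<Sum>y\<in>{..<p} - {x}. nB (sec w y)) = 0" using nB_sec_sum[OF p, of w] x(2) by simp
      then show ?thesis using y by simp
    qed
    have "bsum w j = N j" for j
    proof -
      have "bsum w j = (\<Sum>y<p. bsum (sec w y) j)" using bsum_sec_sum[OF p] by simp
      also have "\<dots> = bsum (sec w x) j + (\<Sum>y\<in>{..<p} - {x}. bsum (sec w y) j)"
        using x(1) by (simp add: sum.remove)
      also have "(\<Sum>y\<in>{..<p} - {x}. bsum (sec w y) j) = 0"
        using others nB0 by simp
      finally show ?thesis by (simp add: N_def)
    qed
    then show ?thesis using N'0 by (simp add: N'_def)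
  next
    case False
    have lt: "nB (sec w x) < nB w" if "x < p" for x using False le that
      using le_neq_implies_less by blast
    have rec: "\<forall>j<r. bsum (sec w x) j mod p = 0" if x: "x < p" for x
    proof (rule less.hyps[OF lt[OF x]], intro allI impI)
      fix y v assume y: "y < p" and v: "word_over p v"
      have "ev (sec w x) (y # v) = y # v" using H x y v by simp
      then show "ev (sec (sec w x) y) v = v" using ev_cons[OF y] by simp
    qed
    show ?thesis
    proof (intro allI impI)
      fix j assume j: "j < r"
      have "bsum w j mod p = (\<Sum>y<p. bsum (sec w y) j) mod p" using bsum_sec_sum[OF p] by simp
      also have "\<dots> = (\<Sum>y<p. bsum (sec w y) j mod p) mod p" by (simp add: mod_sum_eq)
      also have "\<dots> = 0" using rec j by simp
      finally show "bsum w j mod p = 0" .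
    qed
  qed
qed

lemma dot_cong: "(\<forall>j<r. N j mod p = M j mod p) \<Longrightarrow> dot N i mod p = dot M i mod p"
proof -
  assume h: "\<forall>j<r. N j mod p = M j mod p"
  have "dot N i mod p = (\<Sum>j<r. N j * E j i mod p) mod p" by (simp add: dot_def mod_sum_eq)
  also have "\<dots> = (\<Sum>j<r. M j * E j i mod p) mod p"
    by (rule arg_cong[where f="\<lambda>t. t mod p"], rule sum.cong)
       (auto simp: h mod_mult_left_eq[of "N _", symmetric] mod_mult_left_eq[of "M _", symmetric])
  also have "\<dots> = dot M i mod p" by (simp add: dot_def mod_sum_eq)
  finally show ?thesis .
qed

lemma dot_zero_mod: "(\<forall>j<r. N j mod p = 0) \<Longrightarrow> dot N i mod p = 0"
  using dot_cong[of N "\<lambda>_. 0" i] by (simp add: dot_def)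

lemma dir_root:
  assumes "0 < p" "directed0 p (ev w)" shows "alpha w mod p = 0"
proof -
  have "ev w (replicate 1 0) = replicate 1 0" using assms(2) by (simp only: directed0_def)
  then show ?thesis using ev_cons[OF assms(1), of w "[]"] by simp
qed

lemma edge0:
  assumes "tree_edge p (0 # v) (replicate n 0)" "0 < p"
  shows "\<exists>m. tree_edge p v (replicate m 0)"
proof (cases n)
  case 0
  then have "v = []" using assms(1) by (auto simp: tree_edge_def)
  then have "tree_edge p v (replicate 1 0)" using assms(2) by (auto simp: tree_edge_def)
  then show ?thesis by blast
next
  case (Suc m)
  then have "tree_edge p v (replicate m 0)" using assms(1)
    by (auto simp: tree_edge_def)
  then show ?thesis by blast
qed

lemma edge_far:
  assumes "x \<noteq> 0" shows "\<not> tree_edge p (x # y # t) (replicate n 0)"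
proof
  assume "tree_edge p (x # y # t) (replicate n 0)"
  then obtain z where "x # y # t = replicate n 0 @ [z] \<or> replicate n 0 = x # y # t @ [z]"
    by (auto simp: tree_edge_def)
  then show False
  proof
    assume h: "x # y # t = replicate n 0 @ [z]"
    then have "n \<noteq> 0" by (cases n) auto
    then show False using h assms by (cases n) auto
  next
    assume h: "replicate n 0 = x # y # t @ [z]"
    then have "x \<in> set (replicate n 0)" by simp
    then show False using assms by simp
  qed
qed

lemma dir_sec0:
  assumes p: "0 < p" and d: "directed0 p (ev w)"
  shows "directed0 p (ev (sec w 0))"
proof -
  have a: "alpha w mod p = 0" using dir_root[OF p d] .
  have c0: "ev w (0 # u) = 0 # ev (sec w 0) u" for u using ev_cons[OF p, of w u] a by simp
  have 1: "ev (sec w 0) (replicate n 0) = replicate n 0" for n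
  proof -
    have "ev w (replicate (Suc n) 0) = replicate (Suc n) 0" using d by (simp only: directed0_def)
    then show ?thesis using c0 by simp
  qed
  have 2: "trivial_label p (ev (sec w 0)) v"
    if v: "word_over p v" "\<not> (\<exists>n. tree_edge p v (replicate n 0))" for v
  proof -
    have "\<not> (\<exists>n. tree_edge p (0 # v) (replicate n 0))" using v(2) edge0[OF _ p] by blast
    moreover have "word_over p (0 # v)" using v(1) p by simp
    ultimately have "trivial_label p (ev w) (0 # v)" using d by (simp add: directed0_def)
    then show ?thesis using c0 by (simp add: trivial_label_def)
  qed
  show ?thesis using 1 2 by (simp add: directed0_def)
qed

lemma dir_rot:
  assumes p: "0 < p" and d: "directed0 p (ev w)" and x: "x < p" "x \<noteq> 0" and y: "y < p"
    and t: "word_over p t"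
  shows "ev (sec (sec w x) y) t = t"
proof -
  let ?s = "ev (sec (sec w x) y)"
  have step: "?s (t @ [z]) = ?s t @ [z]" if t: "word_over p t" and z: "z < p" for t z
  proof -
    have "word_over p (x # y # t)" using t x y by simp
    moreover have "\<not> (\<exists>n. tree_edge p (x # y # t) (replicate n 0))" using edge_far[OF x(2)] by blast
    ultimately have "trivial_label p (ev w) (x # y # t)" using d by (simp add: directed0_def)
    then have "ev w (x # y # (t @ [z])) = ev w (x # y # t) @ [z]" using z by (simp add: trivial_label_def)
    then show ?thesis using ev_cons[OF x(1), of w] ev_cons[OF y, of "sec w x"] by simp
  qed
  show ?thesis using t
  proof (induction t rule: rev_induct)
    case Nil then show ?case by simp
  next
    case (snoc z t)
    then have "word_over p t" "z < p" by (auto simp: word_over_def)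
    then show ?case using step snoc by simp
  qed
qed

lemma key_other:
  assumes p: "0 < p" and bm: "basis_matrix p r E" and d: "directed0 p (ev w)"
    and y: "y < p" "y \<noteq> 0"
  shows "\<forall>j<r. bsum (sec w y) j mod p = 0"
  using rotR[OF p bm] dir_rot[OF p d y] by blast

lemma key0:
  assumes p: "0 < p" and bm: "basis_matrix p r E" and d: "directed0 p (ev w)"
  shows "\<forall>j<r. bsum w j mod p = bsum (sec w 0) j mod p"
proof (intro allI impI)
  fix j assume j: "j < r"
  have "bsum w j = (\<Sum>y<p. bsum (sec w y) j)" using bsum_sec_sum[OF p] by simp
  also have "\<dots> = bsum (sec w 0) j + (\<Sum>y\<in>{..<p} - {0}. bsum (sec w y) j)"
    using p by (simp add: sum.remove)
  finally have e: "bsum w j = bsum (sec w 0) j + (\<Sum>y\<in>{..<p} - {0}. bsum (sec w y) j)" .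
  have "(\<Sum>y\<in>{..<p} - {0}. bsum (sec w y) j) mod p
      = (\<Sum>y\<in>{..<p} - {0}. bsum (sec w y) j mod p) mod p" by (simp add: mod_sum_eq)
  also have "\<dots> = 0" using key_other[OF p bm d] j by simp
  finally have "(\<Sum>y\<in>{..<p} - {0}. bsum (sec w y) j) mod p = 0" .
  then show "bsum w j mod p = bsum (sec w 0) j mod p"
    by (simp add: e mod_add_right_eq[symmetric])
qed

lemma bsum_coef_eq:
  "(\<forall>j<r. N j mod p = M j mod p) \<Longrightarrow> expvec p r E N = expvec p r E M"
proof -
  assume h: "\<forall>j<r. N j mod p = M j mod p"
  have "(\<lambda>j. if j < r then N j mod p else 0) = (\<lambda>j. if j < r then M j mod p else 0)"
    using h by auto
  then have "expvec p r E (\<lambda>j. if j < r then N j mod p else 0) = expvec p r E (\<lambda>j. if j < r then M j mod p else 0)"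
    by simp
  then show ?thesis by (simp only: expvec_modc)
qed

lemma mainM:
  assumes p: "0 < p" and bm: "basis_matrix p r E"
  shows "word_over p u \<Longrightarrow> directed0 p (ev w) \<Longrightarrow> ev w u = bgen p (expvec p r E (bsum w)) u"
proof (induction u arbitrary: w)
  case Nil then show ?case by simp
next
  case (Cons x u)
  have x: "x < p" and u: "word_over p u" using Cons.prems(1) by auto
  note d = Cons.prems(2)
  have a: "alpha w mod p = 0" using dir_root[OF p d] .
  have xa: "(x + alpha w) mod p = x" using a x by (simp add: mod_add_right_eq[of x "alpha w" p, symmetric])
  have ew: "ev w (x # u) = x # ev (sec w x) u" using ev_cons[OF x, of w u] xa by simp
  show ?case
  proof (cases "x = 0")
    case True
    have ih: "ev (sec w 0) u = bgen p (expvec p r E (bsum (sec w 0))) u"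
      using Cons.IH[OF u dir_sec0[OF p d]] .
    have "expvec p r E (bsum (sec w 0)) = expvec p r E (bsum w)"
      using key0[OF p bm d] by (intro bsum_coef_eq) simp
    then show ?thesis using ew ih True by simp
  next
    case False
    define W where "W = sec w x"
    have evW: "ev W u = rot p (alpha W) u"
    proof (cases u)
      case Nil then show ?thesis by simp
    next
      case (Cons y t)
      then have y: "y < p" and t: "word_over p t" using u by auto
      have "ev W (y # t) = ((y + alpha W) mod p) # ev (sec W y) t" using ev_cons[OF y] .
      also have "ev (sec W y) t = t" using dir_rot[OF p d x False y t] by (simp add: W_def)
      finally show ?thesis using Cons y by simp
    qed
    have s1: "alpha W mod p
        = (\<Sum>y<p. (if y = x then 0 else dot (bsum (sec w y)) ((x + p - y) mod p)) mod p) mod p"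
      using alpha_sec[OF p x, of w] by (simp add: W_def mod_sum_eq)
    also have "(\<Sum>y<p. (if y = x then 0 else dot (bsum (sec w y)) ((x + p - y) mod p)) mod p)
        = (\<Sum>y<p. if y = 0 then dot (bsum (sec w 0)) x mod p else 0)"
    proof (rule sum.cong)
      fix y assume "y \<in> {..<p}"
      then have yp: "y < p" by simp
      show "(if y = x then 0 else dot (bsum (sec w y)) ((x + p - y) mod p)) mod p
          = (if y = 0 then dot (bsum (sec w 0)) x mod p else 0)"
      proof (cases "y = 0")
        case True then show ?thesis using False x by simp
      next
        case y0: False
        show ?thesis
        proof (cases "y = x")
          case True then show ?thesis using y0 by simp
        next
          case False
          then show ?thesis using y0 dot_zero_mod key_other[OF p bm d yp y0] by simp
        qed
      qed
    qed simp
    also have "(\<Sum>y<p. if y = 0 then dot (bsum (sec w 0)) x mod p else 0) = dot (bsum (sec w 0)) x mod p"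
      using p by (simp add: sum.delta)
    finally have "alpha W mod p = dot (bsum (sec w 0)) x mod p" by simp
    also have "\<dots> = dot (bsum w) x mod p"
      using key0[OF p bm d] by (intro dot_cong) simp
    also have "\<dots> = expvec p r E (bsum w) x mod p" by (simp add: expvec_dot)
    finally have "rot p (alpha W) = rot p (expvec p r E (bsum w) x)" by (rule rot_mod)
    then show ?thesis using ew evW False x by (simp add: W_def)
  qed
qed

lemma ev_split:
  assumes p: "0 < p" and z: "p \<le> z"
  shows "word_over p t1 \<Longrightarrow> ev w (t1 @ z # t2) = ev w t1 @ z # t2"
proof (induction t1 arbitrary: w)
  case Nil then show ?case using ev_big[OF p z] by simp
next
  case (Cons x t1)
  have x: "x < p" and t: "word_over p t1" using Cons.prems by auto
  have "ev w ((x # t1) @ z # t2) = ((x + alpha w) mod p) # ev (sec w x) (t1 @ z # t2)"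
    using ev_cons[OF x] by simp
  also have "ev (sec w x) (t1 @ z # t2) = ev (sec w x) t1 @ z # t2" using Cons.IH[OF t] .
  finally show ?case using ev_cons[OF x, of w t1] by simp
qed

lemma ev_ext:
  assumes p: "0 < p" and h: "\<And>u. word_over p u \<Longrightarrow> ev w1 u = ev w2 u"
  shows "ev w1 = ev w2"
proof
  fix u
  show "ev w1 u = ev w2 u"
  proof (cases "word_over p u")
    case True then show ?thesis using h by blast
  next
    case False
    then have "\<exists>x\<in>set u. p \<le> x" by (auto simp: word_over_def not_less)
    then obtain t1 z t2 where u: "u = t1 @ z # t2" "p \<le> z" "\<forall>y\<in>set t1. \<not> p \<le> y"
      by (rule split_list_first_propE)
    have t1: "word_over p t1" using u(3) by (auto simp: word_over_def not_le)
    show ?thesis using ev_split[OF p u(2) t1] h[OF t1] u(1) by simp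
  qed
qed

lemma final_ctx:
  assumes pr: "prime p" and bm: "basis_matrix p r E" and g: "g \<in> GE p r E"
    and d: "directed0 p g"
  shows "g \<in> Bset p r E"
proof -
  have p: "0 < p" using pr prime_gt_0_nat by blast
  obtain w where w: "g = ev w" using gen_ev[OF p] g by (auto simp: GE_def)
  define N where "N = bsum w"
  have "ev w = ev [LB N]"
  proof (rule ev_ext[OF p])
    fix u assume "word_over p u"
    then show "ev w u = ev [LB N] u" using mainM[OF p bm] d w by (simp add: N_def)
  qed
  then have gN: "g = bgen p (expvec p r E N)" using w by simp
  define N' where "N' = (\<lambda>j. if j < r then N j mod p else 0)"
  have "N' \<in> coeffs p r" using p by (simp add: N'_def coeffs_def)
  moreover have "g = bgen p (expvec p r E N')" using gN by (simp add: N'_def expvec_modc)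
  ultimately show ?thesis by (auto simp: Bset_def)
qed

end

theorem mainTheorem14:
  fixes p r :: nat and Emat :: "nat \<Rightarrow> nat \<Rightarrow> nat" and g :: "nat list \<Rightarrow> nat list"
  assumes "prime p" and "odd p"
    and "r \<ge> 1" and "basis_matrix p r Emat"
    and "rowspace p r Emat \<noteq> constspace p"
    and "g \<in> GE p r Emat"
    and "directed0 p g"
  shows "g \<in> Bset p r Emat"
  using final_ctx assms by blast

end
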